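(* Let $\bm{A}\in\mathbb{R}^{d\times K}$ with $K\le d$, let $g(\bm{Q})=\langle\bm{A},\bm{Q}\rangle+\delta_{{\rm St}(d,K)}(\bm{Q})$, and define $R:{\rm St}(d,K)\to\mathbb{R}^{d\times K}$ by $R(\bm{Q})=\bm{A}-\bm{Q}\bm{A}^T\bm{Q}$. Then for every $\bm{Q}\in{\rm St}(d,K)$, $$\operatorname{dist}(\bm{0},\partial g(\bm{Q}))=\Big\|\Big(\bm{I}_d-\tfrac12\bm{Q}\bm{Q}^T\Big)R(\bm{Q})\Big\|_F\quad\text{and}\quad\tfrac12\|R(\bm{Q})\|_F\le\operatorname{dist}(\bm{0},\partial g(\bm{Q}))\le\|R(\bm{Q})\|_F.$$ In particular, $\bm{Q}$ is a limiting critical point of $g$ (i.e. $\bm{0}\in\partial g(\bm{Q})$) if and only if $\bm{Q}\in{\rm St}(d,K)$ and $R(\bm{Q})=\bm{0}$.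
   Context: ${\rm St}(d,K)=\{\bm{Q}\in\mathbb{R}^{d\times K}:\bm{Q}^T\bm{Q}=\bm{I}_K\}$; $\langle\bm{A},\bm{B}\rangle=\operatorname{tr}(\bm{A}^T\bm{B})$; $\delta_{\mathcal{S}}$ is the indicator function of $\mathcal{S}$; $\partial$ denotes the limiting subdifferential; $\operatorname{dist}(\bm{0},S)=\inf_{\bm{s}\in S}\|\bm{s}\|_F$. *)

theory Defs
  imports "HOL-Analysis.Analysis"
begin

text \<open>d x K real matrices are represented as real^'k^'d (rows indexed by 'd, columns by 'k).
  The norm on this type is the Frobenius norm and the inner product is the Frobenius
  inner product tr(A^T B).\<close>

definition stiefel :: "(real^'k^'d) set" where
  "stiefel = {Q. transpose Q ** Q = mat 1}"

definition frechet_subdiff :: "('a::real_inner \<Rightarrow> ereal) \<Rightarrow> 'a \<Rightarrow> 'a set" where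
  "frechet_subdiff f x = {v. \<bar>f x\<bar> \<noteq> \<infinity> \<and>
     (\<forall>e>0. \<exists>\<delta>>0. \<forall>y. norm (y - x) < \<delta> \<longrightarrow>
        f y \<ge> f x + ereal (inner v (y - x)) - ereal (e * norm (y - x)))}"

definition limiting_subdiff :: "('a::real_inner \<Rightarrow> ereal) \<Rightarrow> 'a \<Rightarrow> 'a set" where
  "limiting_subdiff f x = {v. \<bar>f x\<bar> \<noteq> \<infinity> \<and>
     (\<exists>xs vs. xs \<longlonglongrightarrow> x \<and> (\<lambda>n. f (xs n)) \<longlonglongrightarrow> f x \<and>
        (\<forall>n. vs n \<in> frechet_subdiff f (xs n)) \<and> vs \<longlonglongrightarrow> v)}"

definition gfun :: "real^'k^'d \<Rightarrow> real^'k^'d \<Rightarrow> ereal" where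
  "gfun A Q = (if Q \<in> stiefel then ereal (inner A Q) else \<infinity>)"

definition Rmap :: "real^'k^'d \<Rightarrow> real^'k^'d \<Rightarrow> real^'k^'d" where
  "Rmap A Q = A - Q ** transpose A ** Q"

end

theory Submission
  imports Defs
begin

lemma inner_mat: "inner (X::real^'k^'d) Y = (\<Sum>i\<in>UNIV. \<Sum>j\<in>UNIV. X$i$j * Y$i$j)"
  by (simp add: inner_vec_def)

lemma inner_cols: "inner (X::real^'k^'d) Y = (\<Sum>j\<in>UNIV. inner (column j X) (column j Y))"
  unfolding inner_vec_def column_def by (simp, rule sum.swap)
lemma inner_adj: "inner (X::real^'k^'d) (Q ** (Y::real^'k^'m)) = inner (transpose Q ** X) Y"
proof -
  have "inner X (Q ** Y) = (\<Sum>i\<in>UNIV. \<Sum>j\<in>UNIV. \<Sum>n\<in>UNIV. X$i$j * Q$i$n * Y$n$j)"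
    unfolding inner_mat matrix_matrix_mult_def by (simp add: sum_distrib_left mult.assoc)
  also have "\<dots> = (\<Sum>i\<in>UNIV. \<Sum>n\<in>UNIV. \<Sum>j\<in>UNIV. X$i$j * Q$i$n * Y$n$j)"
    by (rule sum.cong[OF refl], rule sum.swap)
  also have "\<dots> = (\<Sum>n\<in>UNIV. \<Sum>i\<in>UNIV. \<Sum>j\<in>UNIV. X$i$j * Q$i$n * Y$n$j)"
    by (rule sum.swap)
  also have "\<dots> = (\<Sum>n\<in>UNIV. \<Sum>j\<in>UNIV. \<Sum>i\<in>UNIV. X$i$j * Q$i$n * Y$n$j)"
    by (rule sum.cong[OF refl], rule sum.swap)
  also have "\<dots> = inner (transpose Q ** X) Y"
    unfolding inner_mat matrix_matrix_mult_def transpose_def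
    by (simp add: sum_distrib_left mult.assoc mult.commute mult.left_commute)
  finally show ?thesis .
qed

lemma inner_transp: "inner (X::real^'k^'d) Y = inner (transpose X) (transpose Y)"
  unfolding inner_mat transpose_def by (simp, rule sum.swap)

lemma mm_sub_right: "(A::real^'n^'m) ** (B - C) = A ** B - A ** C"
  by (simp add: matrix_matrix_mult_def vec_eq_iff sum_subtractf algebra_simps)
lemma mm_sub_left: "((A::real^'n^'m) - B) ** C = A ** C - B ** C"
  by (simp add: matrix_matrix_mult_def vec_eq_iff sum_subtractf algebra_simps)
lemma mm_add_left: "((A::real^'n^'m) + B) ** C = A ** C + B ** C"
  by (simp add: matrix_matrix_mult_def vec_eq_iff sum.distrib algebra_simps)
lemma mm_scale_left: "((c::real) *\<^sub>R (A::real^'n^'m)) ** C = c *\<^sub>R (A ** C)"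
  by (simp add: matrix_matrix_mult_def vec_eq_iff sum_distrib_left algebra_simps)
lemma mm_scale_right: "(A::real^'n^'m) ** ((c::real) *\<^sub>R C) = c *\<^sub>R (A ** C)"
  by (simp add: matrix_matrix_mult_def vec_eq_iff sum_distrib_left algebra_simps)
lemma mm_neg_right: "(A::real^'n^'m) ** (- C) = - (A ** C)"
  by (simp add: matrix_matrix_mult_def vec_eq_iff sum_negf algebra_simps)
lemma transpose_add': "transpose ((A::real^'n^'m) + B) = transpose A + transpose B"
  by (simp add: transpose_def vec_eq_iff)
lemma transpose_sub': "transpose ((A::real^'n^'m) - B) = transpose A - transpose B"
  by (simp add: transpose_def vec_eq_iff)
lemma transpose_neg': "transpose (- (A::real^'n^'m)) = - transpose A"
  by (simp add: transpose_def vec_eq_iff)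

lemma norm_sq_rows: "(norm (X::real^'k^'d))^2 = (\<Sum>i\<in>UNIV. (norm (X$i))^2)"
  by (simp add: dot_square_norm[symmetric] inner_vec_def)
lemma norm_sq_cols: "(norm (X::real^'k^'d))^2 = (\<Sum>j\<in>UNIV. (norm (column j X))^2)"
  by (simp add: dot_square_norm[symmetric] inner_cols[of X X])

lemma norm_sq_vec: "(norm (v::real^'n))^2 = (\<Sum>j\<in>UNIV. (v$j)^2)"
  unfolding dot_square_norm[symmetric] inner_vec_def by (simp add: power2_eq_square)

lemma mm_entry: "((X::real^'n^'m) ** Y)$i$j = inner (X$i) (column j Y)"
  by (simp add: matrix_matrix_mult_def inner_vec_def column_def)

lemma norm_mm: "norm ((X::real^'n^'m) ** (Y::real^'p^'n)) \<le> norm X * norm Y"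
proof -
  have "(norm (X ** Y))^2 = (\<Sum>i\<in>UNIV. \<Sum>j\<in>UNIV. (inner (X$i) (column j Y))^2)"
    by (simp add: norm_sq_rows norm_sq_vec mm_entry)
  also have "\<dots> \<le> (\<Sum>i\<in>UNIV. \<Sum>j\<in>UNIV. (norm (X$i))^2 * (norm (column j Y))^2)"
  proof (intro sum_mono)
    fix i j
    have "\<bar>inner (X$i) (column j Y)\<bar> \<le> norm (X$i) * norm (column j Y)"
      by (rule Cauchy_Schwarz_ineq2)
    then have "(inner (X$i) (column j Y))^2 \<le> (norm (X$i) * norm (column j Y))^2"
      by (metis abs_ge_zero power2_abs power_mono)
    then show "(inner (X$i) (column j Y))^2 \<le> (norm (X$i))^2 * (norm (column j Y))^2"
      by (simp add: power_mult_distrib)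
  qed
  also have "\<dots> = (\<Sum>i\<in>UNIV. (norm (X$i))^2) * (\<Sum>j\<in>UNIV. (norm (column j Y))^2)"
    by (simp add: sum_product)
  also have "\<dots> = (norm X)^2 * (norm Y)^2"
    by (simp only: norm_sq_rows[of X, symmetric] norm_sq_cols[of Y, symmetric])
  also have "\<dots> = (norm X * norm Y)^2" by (simp add: power_mult_distrib)
  finally show ?thesis
    by (meson mult_nonneg_nonneg norm_ge_zero power2_le_imp_le)
qed

lemma QtQ_entry: "(transpose Q ** (Q::real^'k^'d))$i$j = inner (column i Q) (column j Q)"
  by (simp add: mm_entry transpose_def column_def)

lemma stiefel_iff: "(Q::real^'k^'d) \<in> stiefel \<longleftrightarrow> (\<forall>i j. inner (column i Q) (column j Q) = (if i = j then 1 else 0))"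
  unfolding stiefel_def by (simp add: vec_eq_iff QtQ_entry mat_def)

lemma st_QtQ: "Q \<in> stiefel \<Longrightarrow> transpose Q ** Q = mat 1"
  by (simp add: stiefel_def)

lemma st_Qt_QX: "Q \<in> stiefel \<Longrightarrow> transpose Q ** (Q ** X) = X"
  by (simp add: matrix_mul_assoc st_QtQ)

lemma norm_QX: assumes "(Q::real^'k^'d) \<in> stiefel" shows "norm (Q ** (X::real^'m^'k)) = norm X"
proof -
  have "(norm (Q ** X))^2 = inner (Q ** X) (Q ** X)" by (simp add: dot_square_norm)
  also have "\<dots> = inner X X" by (simp add: inner_adj st_Qt_QX[OF assms] inner_commute)
  finally show ?thesis by (simp add: dot_square_norm)
qed

lemma orth_QZ: assumes "(Q::real^'k^'d) \<in> stiefel" "transpose Q ** U = 0"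
  shows "inner U (Q ** Z) = 0"
  using assms(2) by (simp add: inner_adj)

lemma bounds_lemma:
  fixes Q :: "real^'k^'d" and R :: "real^'m^'d"
  assumes st: "Q \<in> stiefel"
  shows "(1/2) * norm R \<le> norm ((mat 1 - (1/2) *\<^sub>R (Q ** transpose Q)) ** R)
       \<and> norm ((mat 1 - (1/2) *\<^sub>R (Q ** transpose Q)) ** R) \<le> norm R"
proof -
  define V where "V = transpose Q ** R"
  define U where "U = R - Q ** V"
  have QU: "transpose Q ** U = 0"
    by (simp add: U_def V_def mm_sub_right st_Qt_QX[OF st])
  have X: "(mat 1 - (1/2) *\<^sub>R (Q ** transpose Q)) ** R = U + (1/2) *\<^sub>R (Q ** V)"
    by (simp add: U_def V_def mm_sub_left mm_scale_left matrix_mul_assoc algebra_simps)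
  have o1: "orthogonal U (Q ** V)" using orth_QZ[OF st QU] by (simp add: orthogonal_def)
  have o2: "orthogonal U ((1/2) *\<^sub>R (Q ** V))" using o1 by (simp add: orthogonal_def)
  have R: "R = U + Q ** V" by (simp add: U_def)
  have nR: "(norm R)^2 = (norm U)^2 + (norm (Q ** V))^2"
    using norm_add_Pythagorean[OF o1] R by simp
  have nX: "(norm (U + (1/2) *\<^sub>R (Q ** V)))^2 = (norm U)^2 + (1/4) * (norm (Q ** V))^2"
    using norm_add_Pythagorean[OF o2] by (simp add: power2_eq_square)
  have a: "((1/2) * norm R)^2 \<le> (norm (U + (1/2) *\<^sub>R (Q ** V)))^2"
    using nR nX by (simp add: power2_eq_square algebra_simps)
  have b: "(norm (U + (1/2) *\<^sub>R (Q ** V)))^2 \<le> (norm R)^2"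
    using nR nX by simp
  show ?thesis unfolding X
    using a b by (meson norm_ge_zero power2_le_imp_le)
qed

definition crit :: "real^'k^'d \<Rightarrow> real^'k^'d \<Rightarrow> bool" where
  "crit Q W \<longleftrightarrow> Q ** (transpose Q ** W) = W \<and> transpose (transpose Q ** W) = transpose Q ** W"

definition Tm :: "real^'k^'d \<Rightarrow> real^'k^'d \<Rightarrow> real^'k^'k" where
  "Tm A Q = (1/2) *\<^sub>R (transpose Q ** A + transpose (transpose Q ** A))"

definition Pm :: "real^'k^'d \<Rightarrow> real^'k^'d \<Rightarrow> real^'k^'d" where
  "Pm A Q = A - Q ** Tm A Q"

lemma Tm_sym: "transpose (Tm A Q) = Tm A Q"
  by (simp add: Tm_def transpose_scalar transpose_add' add.commute)

lemma P_crit: assumes st: "Q \<in> stiefel" shows "crit Q (Pm A Q - A)"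
proof -
  have e: "Pm A Q - A = Q ** (- Tm A Q)" by (simp add: Pm_def mm_neg_right)
  show ?thesis unfolding crit_def e st_Qt_QX[OF st] by (simp add: transpose_neg' Tm_sym)
qed

lemma P_min: assumes st: "Q \<in> stiefel" and c: "crit Q (v - A)"
  shows "norm (Pm A Q) \<le> norm v"
proof -
  define S where "S = transpose Q ** (v - A)"
  define U where "U = Tm A Q + S"
  define M where "M = transpose Q ** A"
  have Usym: "transpose U = U" using c by (simp add: U_def S_def crit_def transpose_add' Tm_sym)
  have v: "v = Pm A Q + Q ** U"
  proof -
    have "v - A = Q ** S" using c by (simp add: crit_def S_def)
    then show ?thesis by (simp add: Pm_def U_def matrix_add_ldistrib algebra_simps)
  qed
  have QP: "transpose Q ** Pm A Q = (1/2) *\<^sub>R (M - transpose M)"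
    by (simp add: Pm_def mm_sub_right st_Qt_QX[OF st] Tm_def M_def algebra_simps)
  have tr: "inner (transpose M) U = inner M U"
    using inner_transp[of "transpose M" U] Usym by simp
  have "inner (Pm A Q) (Q ** U) = 0"
    unfolding inner_adj QP using tr by (simp add: inner_diff_left)
  then have o: "orthogonal (Pm A Q) (Q ** U)" by (simp add: orthogonal_def)
  have "(norm v)^2 = (norm (Pm A Q))^2 + (norm (Q ** U))^2"
    using norm_add_Pythagorean[OF o] v by simp
  then have "(norm (Pm A Q))^2 \<le> (norm v)^2" by simp
  then show ?thesis by (meson norm_ge_zero power2_le_imp_le)
qed

lemma P_formula: assumes st: "Q \<in> stiefel"
  shows "Pm A Q = (mat 1 - (1/2) *\<^sub>R (Q ** transpose Q)) ** Rmap A Q"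
proof -
  have k: "(Q ** transpose Q) ** ((Q ** transpose A) ** Q) = (Q ** transpose A) ** Q"
    by (metis matrix_mul_assoc st_QtQ[OF st] matrix_mul_lid)
  have r1: "(mat 1 - (1/2) *\<^sub>R (Q ** transpose Q)) ** Rmap A Q
      = Rmap A Q - (1/2) *\<^sub>R ((Q ** transpose Q) ** Rmap A Q)"
    by (simp add: mm_sub_left mm_scale_left)
  have r2: "(Q ** transpose Q) ** Rmap A Q = (Q ** transpose Q) ** A - (Q ** transpose A) ** Q"
    unfolding Rmap_def mm_sub_right k ..
  have r: "(mat 1 - (1/2) *\<^sub>R (Q ** transpose Q)) ** Rmap A Q
      = A - (1/2) *\<^sub>R ((Q ** transpose A) ** Q) - (1/2) *\<^sub>R ((Q ** transpose Q) ** A)"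
    unfolding r1 r2 by (simp add: Rmap_def algebra_simps)
  have "Pm A Q = A - (1/2) *\<^sub>R ((Q ** transpose A) ** Q) - (1/2) *\<^sub>R ((Q ** transpose Q) ** A)"
    by (simp add: Pm_def Tm_def mm_scale_right matrix_add_ldistrib matrix_transpose_mul matrix_mul_assoc algebra_simps)
  with r show ?thesis by simp
qed

lemma infdist_crit: assumes st: "Q \<in> stiefel"
  shows "infdist 0 {v. crit Q (v - A)} = norm (Pm A Q)"
proof -
  let ?L = "{v. crit Q (v - A)}"
  have P: "Pm A Q \<in> ?L" using P_crit[OF st] by simp
  have ne: "?L \<noteq> {}" using P by blast
  have "infdist 0 ?L = (INF a\<in>?L. dist 0 a)" using ne by (metis infdist_def)
  also have "\<dots> = norm (Pm A Q)"
  proof (rule antisym)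
    show "(INF a\<in>?L. dist 0 a) \<le> norm (Pm A Q)"
      using cINF_lower[of "\<lambda>a. dist 0 a" ?L "Pm A Q"] P
      by (simp add: bdd_below_def) (meson norm_ge_zero)
    show "norm (Pm A Q) \<le> (INF a\<in>?L. dist 0 a)"
      using ne P_min[OF st] by (intro cINF_greatest) auto
  qed
  finally show ?thesis .
qed

lemma norm_transpose: "norm (transpose (X::real^'k^'d)) = norm X"
  by (simp add: norm_eq_sqrt_inner inner_transp[of X X])

lemma quad_bound:
  assumes st: "Q \<in> stiefel" and sy: "y \<in> stiefel" and c: "crit Q W"
  shows "inner W (y - Q) \<le> (1/2) * norm (transpose Q ** W) * (norm (y - Q))^2"
proof -
  define S where "S = transpose Q ** W"
  define H where "H = y - Q"
  define K where "K = transpose Q ** H"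
  have W: "W = Q ** S" using c by (simp add: crit_def S_def)
  have Ssym: "transpose S = S" using c by (simp add: crit_def S_def)
  have e1: "inner W H = inner K S"
    unfolding W K_def inner_commute[of "Q ** S" H] inner_adj ..
  have e2: "inner K S = inner (transpose K) S"
    using inner_transp[of K S] Ssym by simp
  have KK: "K + transpose K = - (transpose H ** H)"
    using st_QtQ[OF st] st_QtQ[OF sy]
    by (simp add: K_def H_def mm_sub_right mm_sub_left transpose_sub' matrix_transpose_mul
        algebra_simps)
  have "2 * inner W H = inner (K + transpose K) S" by (simp add: e1 e2[symmetric] inner_add_left)
  also have "\<dots> = - inner (transpose H ** H) S" by (simp add: KK)
  also have "\<dots> \<le> norm (transpose H ** H) * norm S"
    using Cauchy_Schwarz_ineq2[of "transpose H ** H" S] by (simp add: abs_le_iff)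
  also have "\<dots> \<le> (norm H * norm H) * norm S"
    using norm_mm[of "transpose H" H] by (simp add: norm_transpose mult_right_mono)
  finally show ?thesis by (simp add: S_def H_def power2_eq_square algebra_simps)
qed

lemma frechet_sup:
  assumes st: "Q \<in> stiefel" and c: "crit Q (v - A)"
  shows "v \<in> frechet_subdiff (gfun A) Q"
proof -
  define s where "s = norm (transpose Q ** (v - A))"
  have "\<exists>\<delta>>0. \<forall>y. norm (y - Q) < \<delta> \<longrightarrow>
        gfun A y \<ge> gfun A Q + ereal (inner v (y - Q)) - ereal (e * norm (y - Q))" if e: "e > 0" for e
  proof (intro exI[of _ "2 * e / (s + 1)"] conjI allI impI)
    have s0: "s \<ge> 0" by (simp add: s_def)
    show "2 * e / (s + 1) > 0" using e s0 by simp
    fix y assume y: "norm (y - Q) < 2 * e / (s + 1)"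
    show "gfun A y \<ge> gfun A Q + ereal (inner v (y - Q)) - ereal (e * norm (y - Q))"
    proof (cases "y \<in> stiefel")
      case False then show ?thesis by (simp add: gfun_def)
    next
      case True
      have qb: "inner (v - A) (y - Q) \<le> (1/2) * s * (norm (y - Q))^2"
        using quad_bound[OF st True c] by (simp add: s_def)
      have "s * norm (y - Q) \<le> s * (2 * e / (s + 1))"
        using y s0 by (metis less_imp_le mult_left_mono)
      also have "\<dots> \<le> 2 * e" using s0 e by (simp add: field_simps)
      finally have "(s * norm (y - Q)) * norm (y - Q) \<le> (2 * e) * norm (y - Q)"
        by (rule mult_right_mono) simp
      then have "(1/2) * s * (norm (y - Q))^2 \<le> e * norm (y - Q)"
        by (simp add: power2_eq_square algebra_simps)
      with qb have "inner (v - A) (y - Q) \<le> e * norm (y - Q)" by simp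
      then have "inner A y \<ge> inner A Q + inner v (y - Q) - e * norm (y - Q)"
        by (simp add: inner_diff_left inner_diff_right)
      then show ?thesis using True st by (simp add: gfun_def)
    qed
  qed
  then show ?thesis using st by (simp add: frechet_subdiff_def gfun_def)
qed

definition rot :: "real^'d \<Rightarrow> real^'d \<Rightarrow> real \<Rightarrow> real \<Rightarrow> real^'d \<Rightarrow> real^'d" where
  "rot a b c p x = x + ((c - 1) * inner a x - p * inner b x) *\<^sub>R a + ((c - 1) * inner b x + p * inner a x) *\<^sub>R b"

lemma rot_inner:
  assumes a: "inner a a = 1" and b: "inner b b = 1" and ab: "inner a b = 0" and cp: "c^2 + p^2 = 1"
  shows "inner (rot a b c p x) (rot a b c p z) = inner x z"
proof -
  have ba: "inner b a = 0" using ab by (simp add: inner_commute)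
  define ax where "ax = inner a x"
  define bx where "bx = inner b x"
  define az where "az = inner a z"
  define bz where "bz = inner b z"
  have xa: "inner x a = ax" by (simp add: ax_def inner_commute)
  have xb: "inner x b = bx" by (simp add: bx_def inner_commute)
  have "inner (rot a b c p x) (rot a b c p z) = inner x z
     + ((c - 1) * az - p * bz) * ax + ((c - 1) * bz + p * az) * bx
     + ((c - 1) * ax - p * bx) * az + ((c - 1) * bx + p * ax) * bz
     + ((c - 1) * ax - p * bx) * ((c - 1) * az - p * bz)
     + ((c - 1) * bx + p * ax) * ((c - 1) * bz + p * az)"
    unfolding rot_def
    by (simp add: inner_add_left inner_add_right a b ab ba xa xb ax_def[symmetric] bx_def[symmetric]
        az_def[symmetric] bz_def[symmetric] algebra_simps)
  also have "\<dots> = inner x z + (c^2 + p^2 - 1) * (ax * az + bx * bz)"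
    by (simp add: power2_eq_square algebra_simps)
  finally show ?thesis using cp by simp
qed

lemma rot_diff:
  assumes a: "inner a a = 1" and b: "inner b b = 1" and ab: "inner a b = 0" and cp: "c^2 + p^2 = 1"
  shows "(norm (rot a b c p x - x))^2 = (2 - 2 * c) * ((inner a x)^2 + (inner b x)^2)"
proof -
  have ba: "inner b a = 0" using ab by (simp add: inner_commute)
  have "(norm (rot a b c p x - x))^2 = inner (rot a b c p x - x) (rot a b c p x - x)"
    by (simp add: dot_square_norm)
  also have "\<dots> = ((c - 1) * inner a x - p * inner b x)^2 + ((c - 1) * inner b x + p * inner a x)^2"
    unfolding rot_def
    by (simp add: inner_add_left inner_add_right a b ab ba power2_eq_square algebra_simps)
  also have "\<dots> = ((c - 1)^2 + p^2) * ((inner a x)^2 + (inner b x)^2)"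
    by (simp add: power2_eq_square algebra_simps)
  also have "(c - 1)^2 + p^2 = 2 - 2 * c" using cp by (simp add: power2_eq_square algebra_simps)
  finally show ?thesis .
qed

lemma inner_rot_diff:
  "inner w (rot a b c p x - x) = (c - 1) * (inner a x * inner a w + inner b x * inner b w)
      + p * (inner a x * inner b w - inner b x * inner a w)"
  unfolding rot_def by (simp add: inner_add_right inner_commute algebra_simps)

definition rotM :: "real^'d \<Rightarrow> real^'d \<Rightarrow> real \<Rightarrow> real \<Rightarrow> real^'k^'d \<Rightarrow> real^'k^'d" where
  "rotM a b c p Q = (\<chi> r k. rot a b c p (column k Q) $ r)"

lemma column_rotM: "column k (rotM a b c p Q) = rot a b c p (column k Q)"
  by (simp add: rotM_def column_def vec_eq_iff)

lemma column_diff: "column k (X - Y) = column k X - column k (Y::real^'k^'d)"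
  by (simp add: column_def vec_eq_iff)

definition FC :: "real^'k^'d \<Rightarrow> real^'k^'d \<Rightarrow> bool" where
  "FC Q W \<longleftrightarrow> (\<forall>e>0. \<exists>\<delta>>0. \<forall>y\<in>stiefel. norm (y - Q) < \<delta> \<longrightarrow> inner W (y - Q) \<le> e * norm (y - Q))"

lemma eps_lemma:
  fixes \<beta> K L :: real
  assumes K: "K \<ge> 0" and L: "L \<ge> 0"
    and h: "\<And>e. e > 0 \<Longrightarrow> \<exists>s0>0. \<forall>s. 0 < s \<and> s < s0 \<longrightarrow> \<beta> \<le> s * K + e * L"
  shows "\<beta> \<le> 0"
proof (rule ccontr)
  assume "\<not> \<beta> \<le> 0" then have bp: "\<beta> > 0" by simp
  define e where "e = \<beta> / (4 * (L + 1))"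
  have e: "e > 0" using bp L by (simp add: e_def)
  obtain s0 where s0: "s0 > 0" and hs: "\<forall>s. 0 < s \<and> s < s0 \<longrightarrow> \<beta> \<le> s * K + e * L"
    using h[OF e] by blast
  define s where "s = min (s0 / 2) (\<beta> / (4 * (K + 1)))"
  have s: "0 < s" "s < s0" using s0 bp K by (auto simp: s_def)
  have "\<beta> \<le> s * K + e * L" using hs s by blast
  moreover have "s * K \<le> \<beta> / 4"
  proof -
    have "s * K \<le> (\<beta> / (4 * (K + 1))) * K" using K s by (intro mult_right_mono) (auto simp: s_def)
    also have "\<dots> \<le> \<beta> / 4" using K bp by (simp add: field_simps)
    finally show ?thesis .
  qed
  moreover have "e * L \<le> \<beta> / 4" using L bp by (simp add: e_def field_simps)
  ultimately show False using bp by linarith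
qed

lemma rotM_stiefel:
  assumes st: "Q \<in> stiefel" and a: "inner a a = 1" and b: "inner b b = 1" and ab: "inner a b = 0"
    and cp: "c^2 + p^2 = 1"
  shows "rotM a b c p Q \<in> stiefel"
  using st unfolding stiefel_iff column_rotM rot_inner[OF a b ab cp] .

lemma rot_main:
  fixes Q W :: "real^'k^'d"
  assumes st: "Q \<in> stiefel" and fc: "FC Q W"
    and a: "inner a a = 1" and b: "inner b b = 1" and ab: "inner a b = 0"
  shows "(\<Sum>k\<in>UNIV. inner a (column k Q) * inner b (column k W) - inner b (column k Q) * inner a (column k W)) \<le> 0"
proof -
  define \<alpha> where "\<alpha> = (\<Sum>k\<in>UNIV. inner a (column k Q) * inner a (column k W) + inner b (column k Q) * inner b (column k W))"
  define \<beta> where "\<beta> = (\<Sum>k\<in>UNIV. inner a (column k Q) * inner b (column k W) - inner b (column k Q) * inner a (column k W))"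
  define m where "m = (\<Sum>k\<in>UNIV. (inner a (column k Q))^2 + (inner b (column k Q))^2)"
  define r where "r = sqrt m"
  have m0: "m \<ge> 0" by (simp add: m_def sum_nonneg)
  have r0: "r \<ge> 0" by (simp add: r_def m0)
  have key: "inner W (rotM a b c p Q - Q) = (c - 1) * \<alpha> + p * \<beta>"
    and nrm: "(norm (rotM a b c p Q - Q))^2 = (2 - 2 * c) * m"
    if cp: "c^2 + p^2 = 1" for c p
  proof -
    show "inner W (rotM a b c p Q - Q) = (c - 1) * \<alpha> + p * \<beta>"
      unfolding inner_cols[of W] column_diff column_rotM inner_rot_diff \<alpha>_def \<beta>_def
      by (simp add: sum.distrib sum_distrib_left ring_distribs sum_subtractf)
    show "(norm (rotM a b c p Q - Q))^2 = (2 - 2 * c) * m"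
      unfolding norm_sq_cols[of "rotM a b c p Q - Q"] column_diff column_rotM rot_diff[OF a b ab cp] m_def
      by (simp add: sum_distrib_left)
  qed
  have "\<beta> \<le> 0"
  proof (rule eps_lemma[of "\<bar>\<alpha>\<bar>" "2 * r"])
    show "\<bar>\<alpha>\<bar> \<ge> 0" "2 * r \<ge> 0" using r0 by auto
    fix e :: real assume e: "e > 0"
    obtain \<delta> where d: "\<delta> > 0" and hd: "\<forall>y\<in>stiefel. norm (y - Q) < \<delta> \<longrightarrow> inner W (y - Q) \<le> e * norm (y - Q)"
      using fc e unfolding FC_def by blast
    show "\<exists>s0>0. \<forall>s. 0 < s \<and> s < s0 \<longrightarrow> \<beta> \<le> s * \<bar>\<alpha>\<bar> + e * (2 * r)"
    proof (intro exI[of _ "min 1 (\<delta> / (2 * r + 1))"] conjI allI impI)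
      show "min 1 (\<delta> / (2 * r + 1)) > 0" using d r0 by simp
      fix s :: real assume s: "0 < s \<and> s < min 1 (\<delta> / (2 * r + 1))"
      define c where "c = (1 - s^2) / (1 + s^2)"
      define p where "p = 2 * s / (1 + s^2)"
      have sp: "1 + s^2 > 0" by (simp add: add_pos_nonneg)
      have cp: "c^2 + p^2 = 1"
      proof -
        have "c^2 + p^2 = ((1 - s^2)^2 + (2 * s)^2) / (1 + s^2)^2"
          by (simp add: c_def p_def power_divide add_divide_distrib)
        also have "(1 - s^2)^2 + (2 * s)^2 = (1 + s^2)^2" by (simp add: power2_eq_square algebra_simps)
        finally show ?thesis using sp by simp
      qed
      define Y where "Y = rotM a b c p Q"
      have Yst: "Y \<in> stiefel" unfolding Y_def by (rule rotM_stiefel[OF st a b ab cp])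
      have "(norm (Y - Q))^2 = (2 - 2 * c) * m" unfolding Y_def by (rule nrm[OF cp])
      also have "2 - 2 * c = 4 * s^2 / (1 + s^2)" unfolding c_def using sp by (simp add: field_simps)
      also have "4 * s^2 / (1 + s^2) * m \<le> 4 * s^2 * m"
        using sp m0 by (simp add: field_simps mult_left_mono)
      also have "4 * s^2 * m = (2 * s * r)^2" using m0 by (simp add: r_def power2_eq_square algebra_simps)
      finally have nY: "norm (Y - Q) \<le> 2 * s * r"
        using s r0 by (meson mult_nonneg_nonneg power2_le_imp_le less_imp_le zero_le_numeral)
      have "2 * s * r < \<delta>"
      proof -
        have "2 * s * r \<le> s * (2 * r + 1)" using s by (simp add: algebra_simps)
        also have "\<dots> < (\<delta> / (2 * r + 1)) * (2 * r + 1)"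
          using s r0 by (intro mult_strict_right_mono) auto
        also have "\<dots> = \<delta>" using r0 by simp
        finally show ?thesis .
      qed
      with nY have "norm (Y - Q) < \<delta>" by linarith
      with hd Yst have "inner W (Y - Q) \<le> e * norm (Y - Q)" by blast
      also have "\<dots> \<le> e * (2 * s * r)" using nY e by (simp add: mult_left_mono)
      finally have ineq: "(c - 1) * \<alpha> + p * \<beta> \<le> e * (2 * s * r)" unfolding Y_def key[OF cp] .
      have cm: "c - 1 = - (2 * s^2) / (1 + s^2)" unfolding c_def using sp by (simp add: field_simps)
      have "(c - 1) * \<alpha> + p * \<beta> = (- (2 * s^2) * \<alpha> + 2 * s * \<beta>) / (1 + s^2)"
        unfolding cm p_def by (simp add: add_divide_distrib diff_divide_distrib)
      also have "\<dots> = (2 * s) * (\<beta> - s * \<alpha>) / (1 + s^2)"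
        by (simp add: algebra_simps power2_eq_square)
      finally have "(c - 1) * \<alpha> + p * \<beta> = (2 * s) * (\<beta> - s * \<alpha>) / (1 + s^2)" .
      with ineq have "(2 * s) * (\<beta> - s * \<alpha>) \<le> e * (2 * s * r) * (1 + s^2)"
        using sp by (simp add: divide_le_eq)
      then have "(2 * s) * (\<beta> - s * \<alpha>) \<le> (2 * s) * (e * r * (1 + s^2))"
        by (simp add: algebra_simps)
      then have "\<beta> - s * \<alpha> \<le> e * r * (1 + s^2)"
        using s by (subst (asm) mult_le_cancel_left_pos) auto
      moreover have "e * r * (1 + s^2) \<le> e * r * 2"
        using s e r0 by (intro mult_left_mono) (auto simp: power2_eq_square intro!: mult_le_one)
      moreover have "s * \<alpha> \<le> s * \<bar>\<alpha>\<bar>" using s by (simp add: mult_left_mono)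
      ultimately show "\<beta> \<le> s * \<bar>\<alpha>\<bar> + e * (2 * r)" by linarith
    qed
  qed
  then show ?thesis by (simp add: \<beta>_def)
qed

lemma oq: "Q \<in> stiefel \<Longrightarrow> inner (column i Q) (column j Q) = (if i = j then 1 else 0)"
  by (simp add: stiefel_iff)

lemma QtW_entry: "(transpose Q ** (W::real^'k^'d))$i$j = inner (column i Q) (column j W)"
  by (simp add: mm_entry transpose_def column_def)

lemma ifmult: "(if P then 1 else 0) * (x::real) = (if P then x else 0)" by simp
lemma ifmult2: "(x::real) * (if P then 1 else 0) = (if P then x else 0)" by simp

lemma beta_case2:
  assumes st: "(Q::real^'k^'d) \<in> stiefel" and ij: "i \<noteq> j"
  shows "(\<Sum>k\<in>UNIV. inner (column i Q) (column k Q) * inner (column j Q) (column k W)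
          - inner (column j Q) (column k Q) * inner (column i Q) (column k W))
       = inner (column j Q) (column i W) - inner (column i Q) (column j W)"
  using ij by (simp add: oq[OF st] sum_subtractf ifmult)

lemma beta_case1:
  assumes st: "(Q::real^'k^'d) \<in> stiefel" and bq: "\<And>k. inner b (column k Q) = 0"
  shows "(\<Sum>k\<in>UNIV. inner (column j Q) (column k Q) * inner b (column k W)
          - inner b (column k Q) * inner (column j Q) (column k W))
       = inner b (column j W)"
  by (simp add: oq[OF st] bq ifmult)

lemma frechet_sub:
  fixes Q W :: "real^'k^'d"
  assumes st: "Q \<in> stiefel" and fc: "FC Q W"
  shows "crit Q W"
proof -
  have qq: "inner (column i Q) (column i Q) = 1" for i using oq[OF st, of i i] by simp
  have symW: "inner (column i Q) (column j W) = inner (column j Q) (column i W)" for i j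
  proof (cases "i = j")
    case True then show ?thesis by simp
  next
    case False
    have o1: "inner (column i Q) (column j Q) = 0" using oq[OF st, of i j] False by simp
    have o2: "inner (column j Q) (column i Q) = 0" using oq[OF st, of j i] False by simp
    have "inner (column j Q) (column i W) - inner (column i Q) (column j W) \<le> 0"
      using rot_main[OF st fc qq[of i] qq[of j] o1] beta_case2[OF st False, of W] False by simp
    moreover have "inner (column i Q) (column j W) - inner (column j Q) (column i W) \<le> 0"
      using rot_main[OF st fc qq[of j] qq[of i] o2] beta_case2[OF st, of j i W] False by simp
    ultimately show ?thesis by linarith
  qed
  have col: "column j W = (\<Sum>k\<in>UNIV. inner (column k Q) (column j W) *\<^sub>R column k Q)" for j
  proof -
    define w where "w = column j W"
    define u where "u = w - (\<Sum>k\<in>UNIV. inner (column k Q) w *\<^sub>R column k Q)"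
    have uq: "inner (column l Q) u = 0" for l
      by (simp add: u_def inner_diff_right inner_sum_right oq[OF st] ifmult2)
    have "u = 0"
    proof (rule ccontr)
      assume u0: "u \<noteq> 0"
      define b where "b = (1 / norm u) *\<^sub>R u"
      have bb: "inner b b = 1" using u0 by (simp add: b_def dot_square_norm power2_eq_square)
      have bq: "inner b (column k Q) = 0" for k using uq[of k] by (simp add: b_def inner_commute)
      have mbq: "inner (- b) (column k Q) = 0" for k using bq[of k] by simp
      have mbb: "inner (- b) (- b) = 1" using bb by simp
      have jb: "inner (column j Q) b = 0" using bq[of j] by (simp add: inner_commute)
      have jmb: "inner (column j Q) (- b) = 0" using jb by simp
      have "inner b w \<le> 0"
        using rot_main[OF st fc qq bb jb] beta_case1[OF st bq, of j W] by (simp add: w_def)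
      moreover have "inner (- b) w \<le> 0"
        using rot_main[OF st fc qq mbb jmb] beta_case1[OF st mbq, of j W] by (simp add: w_def)
      ultimately have "inner b w = 0" by simp
      then have uw: "inner u w = 0" using u0 by (simp add: b_def)
      have "inner u u = inner u w - (\<Sum>k\<in>UNIV. inner (column k Q) w * inner u (column k Q))"
        by (simp add: u_def[of] inner_diff_right inner_sum_right)
      also have "\<dots> = 0" using uw uq by (simp add: inner_commute)
      finally show False using u0 by simp
    qed
    then show ?thesis by (simp add: u_def w_def)
  qed
  have e1: "Q ** (transpose Q ** W) = W"
  proof -
    have "(Q ** (transpose Q ** W))$r$j = W$r$j" for r j
    proof -
      have "(Q ** (transpose Q ** W))$r$j = (\<Sum>k\<in>UNIV. Q$r$k * inner (column k Q) (column j W))"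
        by (simp only: matrix_matrix_mult_def[of Q "transpose Q ** W"] vec_lambda_beta QtW_entry)
      also have "\<dots> = (column j W)$r"
        by (subst col) (simp add: sum_component column_def mult.commute)
      also have "\<dots> = W$r$j" by (simp add: column_def)
      finally show ?thesis .
    qed
    then show ?thesis by (simp add: vec_eq_iff)
  qed
  have e2: "transpose (transpose Q ** W) = transpose Q ** W"
  proof -
    have "(transpose (transpose Q ** W))$i$j = (transpose Q ** W)$i$j" for i j
      unfolding transpose_def[of "transpose Q ** W"] vec_lambda_beta QtW_entry symW[of j i] ..
    then show ?thesis by (simp add: vec_eq_iff)
  qed
  show ?thesis using e1 e2 by (simp add: crit_def)
qed

lemma frechet_FC:
  assumes st: "Q \<in> stiefel" and v: "v \<in> frechet_subdiff (gfun A) Q"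
  shows "FC Q (v - A)"
  unfolding FC_def
proof (intro allI impI)
  fix e :: real assume e: "e > 0"
  obtain \<delta> where d: "\<delta> > 0" and h: "\<forall>y. norm (y - Q) < \<delta> \<longrightarrow>
        gfun A y \<ge> gfun A Q + ereal (inner v (y - Q)) - ereal (e * norm (y - Q))"
    using v e unfolding frechet_subdiff_def by blast
  show "\<exists>\<delta>>0. \<forall>y\<in>stiefel. norm (y - Q) < \<delta> \<longrightarrow> inner (v - A) (y - Q) \<le> e * norm (y - Q)"
  proof (intro exI[of _ \<delta>] conjI ballI impI)
    show "\<delta> > 0" by (rule d)
    fix y assume y: "y \<in> stiefel" "norm (y - Q) < \<delta>"
    then have "ereal (inner A y) \<ge> ereal (inner A Q) + ereal (inner v (y - Q)) - ereal (e * norm (y - Q))"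
      using h[rule_format, OF y(2)] st by (simp add: gfun_def)
    then have "inner A y \<ge> inner A Q + inner v (y - Q) - e * norm (y - Q)" by simp
    then show "inner (v - A) (y - Q) \<le> e * norm (y - Q)"
      by (simp add: inner_diff_left inner_diff_right)
  qed
qed

lemma frechet_char:
  assumes st: "Q \<in> stiefel"
  shows "frechet_subdiff (gfun A) Q = {v. crit Q (v - A)}"
  using frechet_sup[OF st] frechet_sub[OF st] frechet_FC[OF st] by blast

lemma tendsto_mm:
  fixes f :: "'a \<Rightarrow> real^'n^'m" and g :: "'a \<Rightarrow> real^'p^'n"
  assumes "(f \<longlongrightarrow> a) F" "(g \<longlongrightarrow> b) F"
  shows "((\<lambda>x. f x ** g x) \<longlongrightarrow> a ** b) F"
  unfolding matrix_matrix_mult_def by (intro tendsto_intros assms)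

lemma tendsto_tr:
  fixes f :: "'a \<Rightarrow> real^'n^'m"
  assumes "(f \<longlongrightarrow> a) F"
  shows "((\<lambda>x. transpose (f x)) \<longlongrightarrow> transpose a) F"
  unfolding transpose_def by (intro tendsto_intros assms)

lemma frechet_notst: "Q \<notin> stiefel \<Longrightarrow> frechet_subdiff (gfun A) Q = {}"
  by (simp add: frechet_subdiff_def gfun_def)

lemma lim_notst: "Q \<notin> stiefel \<Longrightarrow> limiting_subdiff (gfun A) Q = {}"
  by (simp add: limiting_subdiff_def gfun_def)

lemma lim_char:
  assumes st: "Q \<in> stiefel"
  shows "limiting_subdiff (gfun A) Q = {v. crit Q (v - A)}"
proof
  show "{v. crit Q (v - A)} \<subseteq> limiting_subdiff (gfun A) Q"
  proof
    fix v assume "v \<in> {v. crit Q (v - A)}"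
    then have "v \<in> frechet_subdiff (gfun A) Q" using frechet_sup[OF st] by simp
    then show "v \<in> limiting_subdiff (gfun A) Q" unfolding limiting_subdiff_def
      using st by (intro CollectI conjI exI[of _ "\<lambda>n. Q"] exI[of _ "\<lambda>n. v"]) (auto simp: gfun_def)
  qed
next
  show "limiting_subdiff (gfun A) Q \<subseteq> {v. crit Q (v - A)}"
  proof
    fix v assume "v \<in> limiting_subdiff (gfun A) Q"
    then obtain xs vs where xs: "xs \<longlonglongrightarrow> Q" and fr: "\<forall>n. vs n \<in> frechet_subdiff (gfun A) (xs n)"
      and vs: "vs \<longlonglongrightarrow> v"
      unfolding limiting_subdiff_def by blast
    have stn: "xs n \<in> stiefel" for n using fr frechet_notst by blast
    have cn: "crit (xs n) (vs n - A)" for n using fr frechet_char[OF stn[of n]] by blast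
    have vA: "(\<lambda>n. vs n - A) \<longlonglongrightarrow> v - A" using vs by (intro tendsto_intros)
    have l1: "(\<lambda>n. xs n ** (transpose (xs n) ** (vs n - A)) - (vs n - A))
        \<longlonglongrightarrow> Q ** (transpose Q ** (v - A)) - (v - A)"
      by (intro tendsto_diff tendsto_mm tendsto_tr xs vA)
    have z1: "(\<lambda>n. xs n ** (transpose (xs n) ** (vs n - A)) - (vs n - A)) = (\<lambda>n. 0)"
      using cn by (simp add: crit_def)
    have e1: "Q ** (transpose Q ** (v - A)) - (v - A) = 0"
      using LIMSEQ_unique[OF l1[unfolded z1] tendsto_const] .
    have l2: "(\<lambda>n. transpose (transpose (xs n) ** (vs n - A)) - transpose (xs n) ** (vs n - A))
        \<longlonglongrightarrow> transpose (transpose Q ** (v - A)) - transpose Q ** (v - A)"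
      by (intro tendsto_diff tendsto_mm tendsto_tr xs vA)
    have z2: "(\<lambda>n. transpose (transpose (xs n) ** (vs n - A)) - transpose (xs n) ** (vs n - A)) = (\<lambda>n. 0)"
      using cn by (simp add: crit_def)
    have e2: "transpose (transpose Q ** (v - A)) - transpose Q ** (v - A) = 0"
      using LIMSEQ_unique[OF l2[unfolded z2] tendsto_const] .
    show "v \<in> {v. crit Q (v - A)}" using e1 e2 by (simp add: crit_def)
  qed
qed

theorem proposition1:
  fixes A :: "real^'k^'d"
  assumes "CARD('k) \<le> CARD('d)"
  shows "(\<forall>Q\<in>stiefel.
            infdist 0 (limiting_subdiff (gfun A) Q)
              = norm ((mat 1 - (1/2) *\<^sub>R (Q ** transpose Q)) ** Rmap A Q)
          \<and> (1/2) * norm (Rmap A Q) \<le> infdist 0 (limiting_subdiff (gfun A) Q)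
          \<and> infdist 0 (limiting_subdiff (gfun A) Q) \<le> norm (Rmap A Q))
       \<and> (\<forall>Q. 0 \<in> limiting_subdiff (gfun A) Q \<longleftrightarrow> Q \<in> stiefel \<and> Rmap A Q = 0)"
proof (intro conjI ballI allI)
  fix Q :: "real^'k^'d" assume st: "Q \<in> stiefel"
  have eq: "infdist 0 (limiting_subdiff (gfun A) Q)
              = norm ((mat 1 - (1/2) *\<^sub>R (Q ** transpose Q)) ** Rmap A Q)"
    using lim_char[OF st] infdist_crit[OF st] P_formula[OF st] by simp
  show "infdist 0 (limiting_subdiff (gfun A) Q)
              = norm ((mat 1 - (1/2) *\<^sub>R (Q ** transpose Q)) ** Rmap A Q)" by (rule eq)
  show "(1/2) * norm (Rmap A Q) \<le> infdist 0 (limiting_subdiff (gfun A) Q)"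
    using eq bounds_lemma[OF st, of "Rmap A Q"] by simp
  show "infdist 0 (limiting_subdiff (gfun A) Q) \<le> norm (Rmap A Q)"
    using eq bounds_lemma[OF st, of "Rmap A Q"] by simp
next
  fix Q :: "real^'k^'d"
  show "0 \<in> limiting_subdiff (gfun A) Q \<longleftrightarrow> Q \<in> stiefel \<and> Rmap A Q = 0"
  proof (cases "Q \<in> stiefel")
    case False then show ?thesis using lim_notst[OF False] by simp
  next
    case st: True
    let ?X = "(mat 1 - (1/2) *\<^sub>R (Q ** transpose Q)) ** Rmap A Q"
    have b: "(1/2) * norm (Rmap A Q) \<le> norm ?X" "norm ?X \<le> norm (Rmap A Q)"
      using bounds_lemma[OF st, of "Rmap A Q"] by auto
    show ?thesis
    proof
      assume "0 \<in> limiting_subdiff (gfun A) Q"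
      then have "crit Q (0 - A)" using lim_char[OF st] by simp
      then have "norm (Pm A Q) \<le> norm (0::real^'k^'d)" by (rule P_min[OF st])
      then have "norm ?X = 0" using P_formula[OF st, of A] by simp
      then have "norm (Rmap A Q) = 0" using b by simp
      then show "Q \<in> stiefel \<and> Rmap A Q = 0" using st by simp
    next
      assume "Q \<in> stiefel \<and> Rmap A Q = 0"
      then have "norm ?X = 0" using b by simp
      then have "Pm A Q = 0" using P_formula[OF st, of A] by simp
      then have "crit Q (0 - A)" using P_crit[OF st, of A] by simp
      then show "0 \<in> limiting_subdiff (gfun A) Q" using lim_char[OF st] by simp
    qed
  qed
qed

end
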